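(* Let $\mathbb{T}\in\mathrm{Tr}(2\times\mathbb{N})$. The system $\{z_\eta:\eta\in 2^{<\mathbb{N}}\setminus\{\emptyset\}\}$ is a $1$-unconditional shrinking basis of $E_{\mathbb{T}}$.
   Context: Trees: a tree on $\Lambda$ is a subset of $\Lambda^{<\mathbb{N}}$ closed under initial segments; $[T]$ denotes its infinite branches; elements of a tree on $2\times\mathbb{N}$ are pairs $(\sigma,\nu)$ of sequences of equal length; for $\sigma\in2^{\mathbb{N}}$, $\mathbb{T}(\sigma)=\{\nu\in\mathbb{N}^{<\mathbb{N}}:(\sigma|_{|\nu|},\nu)\in\mathbb{T}\}$. For $\nu=(n_1,\dots,n_k)$ (or infinite) let $\tilde\nu=\{n_1,n_1+n_2,\dots\}$, and for $T\in\mathrm{Tr}(\mathbb{N})$ let $\mathcal{M}_T=\{\tilde\nu:\nu\in T\cup[T]\text{ or }|\nu|\le3\}$. For a compact family $\mathcal{M}$ of subsets of $\mathbb{N}$, $\|\cdot\|_{\mathcal{M}}$ is the norm on $c_{00}$ given as the Minkowski gauge of the smallest absolutely convex $\Theta_{\mathcal{M}}\subset c_{00}$ containing all $e_i=\mathbf{1}_{\{i\}}$ and such that $\frac12\sum_k\mathbf{1}_{E_k}x_k\in\Theta_{\mathcal{M}}$ whenever $x_k\in\Theta_{\mathcal{M}}$ and $E_1<\dots<E_n$ are finite sets for which some element of $\mathcal{M}$ contains $m_1,\dots,m_n$ with $m_1\le E_1<m_2\le E_2<\dots<m_n\le E_n$. $E_{\mathbb{T}}$ is the completion of $c_{00}(2^{<\mathbb{N}}\setminus\{\emptyset\})$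 under $\|x\|_{\mathbb{T}}=\sup_{\sigma\in2^{\mathbb{N}}}\|\sum_{\ell\ge1}x(\sigma|_\ell)e_\ell\|_{\mathcal{M}_{\mathbb{T}(\sigma)}}$, and $z_\eta=\mathbf{1}_{\{\eta\}}$. A basis is $1$-unconditional if $\|\sum_{A}a_ix_i\|\le\|\sum_Ba_ix_i\|$ for finite $A\subset B$; shrinking if the dual functionals span a dense subspace of the dual. *)

theory Defs
  imports "HOL-Analysis.Analysis"
begin

text \<open>Here the natural numbers of the paper are the positive integers (so that
  nu-tilde is a strictly increasing enumeration). The binary alphabet 2 is bool.\<close>

definition tree2N :: "(bool list \<times> nat list) set \<Rightarrow> bool" where
  "tree2N T \<longleftrightarrow>
     (\<forall>s \<nu>. (s, \<nu>) \<in> T \<longrightarrow> length s = length \<nu> \<and> (\<forall>n\<in>set \<nu>. 1 \<le> n)) \<and>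
     (\<forall>s \<nu> k. (s, \<nu>) \<in> T \<longrightarrow> (take k s, take k \<nu>) \<in> T)"

definition Tsec :: "(bool list \<times> nat list) set \<Rightarrow> (nat \<Rightarrow> bool) \<Rightarrow> nat list set" where
  "Tsec T \<sigma> = {\<nu>. (map \<sigma> [0..<length \<nu>], \<nu>) \<in> T}"

definition branches :: "nat list set \<Rightarrow> (nat \<Rightarrow> nat) set" where
  "branches S = {\<nu>. \<forall>k. map \<nu> [0..<k] \<in> S}"

definition tilde_fin :: "nat list \<Rightarrow> nat set" where
  "tilde_fin \<nu> = {sum_list (take k \<nu>) | k. 1 \<le> k \<and> k \<le> length \<nu>}"

definition tilde_inf :: "(nat \<Rightarrow> nat) \<Rightarrow> nat set" where
  "tilde_inf \<nu> = {(\<Sum>i<k. \<nu> i) | k. 1 \<le> k}"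

definition MT :: "nat list set \<Rightarrow> nat set set" where
  "MT S = tilde_fin ` S \<union> tilde_inf ` branches S
          \<union> tilde_fin ` {\<nu>. length \<nu> \<le> 3 \<and> (\<forall>n\<in>set \<nu>. 1 \<le> n)}"

text \<open>Theta_M: the smallest absolutely convex subset of c00(N) containing the unit
  vectors e_i (i in N) and closed under the operation
  (x_k)_k, (E_k)_k |-> 1/2 sum_k 1_{E_k} x_k for M-admissible E_1 < ... < E_n.
  Absolute convexity is expressed by closure under a x + b y with |a|+|b| <= 1.\<close>
inductive_set Theta :: "nat set set \<Rightarrow> (nat \<Rightarrow> real) set" for M :: "nat set set" where
  unit: "1 \<le> i \<Longrightarrow> (\<lambda>j. if j = i then 1 else 0) \<in> Theta M"
| absconv: "x \<in> Theta M \<Longrightarrow> y \<in> Theta M \<Longrightarrow> \<bar>a\<bar> + \<bar>b\<bar> \<le> 1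
            \<Longrightarrow> (\<lambda>j. a * x j + b * y j) \<in> Theta M"
| comb: "\<forall>p\<in>set ps. snd p \<in> Theta M \<Longrightarrow>
         \<forall>p\<in>set ps. finite (fst p) \<and> fst p \<noteq> {} \<Longrightarrow>
         F \<in> M \<Longrightarrow> length ms = length ps \<Longrightarrow> set ms \<subseteq> F \<Longrightarrow>
         \<forall>k<length ps. ms ! k \<le> Min (fst (ps ! k)) \<Longrightarrow>
         \<forall>k. Suc k < length ps \<longrightarrow> Max (fst (ps ! k)) < ms ! Suc k \<Longrightarrow>
         (\<lambda>j. (1/2) * (\<Sum>k<length ps. if j \<in> fst (ps ! k) then snd (ps ! k) j else 0))
           \<in> Theta M"

definition normM :: "nat set set \<Rightarrow> (nat \<Rightarrow> real) \<Rightarrow> real" where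
  "normM M x = Inf {t. 0 < t \<and> (\<lambda>j. x j / t) \<in> Theta M}"

definition c00T :: "(bool list \<Rightarrow> real) set" where
  "c00T = {x. finite {\<eta>. x \<eta> \<noteq> 0} \<and> x [] = 0}"

definition normT :: "(bool list \<times> nat list) set \<Rightarrow> (bool list \<Rightarrow> real) \<Rightarrow> real" where
  "normT T x = (SUP \<sigma>\<in>(UNIV :: (nat \<Rightarrow> bool) set).
      normM (MT (Tsec T \<sigma>)) (\<lambda>l. if 1 \<le> l then x (map \<sigma> [0..<l]) else 0))"

definition zvec :: "bool list \<Rightarrow> bool list \<Rightarrow> real" where
  "zvec \<eta> = (\<lambda>\<xi>. if \<xi> = \<eta> then 1 else 0)"

definition schauder_basis :: "(nat \<Rightarrow> 'a::banach) \<Rightarrow> bool" where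
  "schauder_basis b \<longleftrightarrow>
     (\<forall>x. \<exists>!a::nat \<Rightarrow> real. (\<lambda>n. \<Sum>i<n. a i *\<^sub>R b i) \<longlonglongrightarrow> x)"

definition basis_coef :: "(nat \<Rightarrow> 'a::banach) \<Rightarrow> nat \<Rightarrow> 'a \<Rightarrow> real" where
  "basis_coef b n x = (THE a::nat \<Rightarrow> real. (\<lambda>m. \<Sum>i<m. a i *\<^sub>R b i) \<longlonglongrightarrow> x) n"

definition shrinking :: "(nat \<Rightarrow> 'a::banach) \<Rightarrow> bool" where
  "shrinking b \<longleftrightarrow> (\<forall>n. bounded_linear (basis_coef b n)) \<and>
     closure (span (range (\<lambda>n. Blinfun (basis_coef b n)))) = (UNIV :: ('a \<Rightarrow>\<^sub>L real) set)"

definition one_unconditional :: "('i \<Rightarrow> 'a::real_normed_vector) \<Rightarrow> 'i set \<Rightarrow> bool" where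
  "one_unconditional z I \<longleftrightarrow>
     (\<forall>A B (a::'i \<Rightarrow> real). finite B \<longrightarrow> A \<subseteq> B \<longrightarrow> B \<subseteq> I \<longrightarrow>
        norm (\<Sum>i\<in>A. a i *\<^sub>R z i) \<le> norm (\<Sum>i\<in>B. a i *\<^sub>R z i))"

end

theory Submission
  imports Defs
begin


lemma count_if: "(\<Sum>k<(n::nat). if j \<in> (E k::nat set) then 1 else 0) = real (card {k. k < n \<and> j \<in> E k})"
proof -
  have "(\<Sum>k<n. if j\<in>E k then 1 else 0::real) = (\<Sum>k\<in>{k\<in>{..<n}. j \<in> E k}. 1)"
    by (rule sum.inter_filter[symmetric]) simp
  also have "{k\<in>{..<n}. j \<in> E k} = {k. k < n \<and> j \<in> E k}" by auto
  finally show ?thesis by simp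
qed


definition supp :: "('b \<Rightarrow> real) \<Rightarrow> 'b set" where "supp v = {j. v j \<noteq> 0}"

lemma Theta_zero: "(\<lambda>j. 0) \<in> Theta M"
  using Theta.absconv[OF Theta.unit[of 1] Theta.unit[of 1], of 0 0] by simp

lemma Theta_scale: "x \<in> Theta M \<Longrightarrow> \<bar>c\<bar> \<le> 1 \<Longrightarrow> (\<lambda>j. c * x j) \<in> Theta M"
  using Theta.absconv[of x M x c 0] by simp

lemma succ_sets:
  assumes "\<forall>k<n. ms!k \<le> Min (E k)" "\<forall>k. Suc k < n \<longrightarrow> Max (E k) < ms ! Suc k"
    "\<forall>k<n. finite (E k) \<and> E k \<noteq> {}"
  shows "k < k' \<Longrightarrow> k' < n \<Longrightarrow> Max (E k) < Min (E k')"
proof (induction k')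
  case 0 then show ?case by simp
next
  case (Suc k'')
  show ?case
  proof (cases "k = k''")
    case True
    then show ?thesis using assms Suc.prems by force
  next
    case False
    then have "Max (E k) < Min (E k'')" using Suc by simp
    also have "\<dots> \<le> Max (E k'')"
    proof -
      have "k'' < n" using Suc.prems by simp
      then have f: "finite (E k'')" "E k'' \<noteq> {}" using assms(3) by auto
      show ?thesis using Min_le[OF f(1) Max_in[OF f]] .
    qed
    also have "\<dots> < ms ! Suc k''" using assms(2) Suc.prems by simp
    also have "\<dots> \<le> Min (E (Suc k''))" using assms(1) Suc.prems by simp
    finally show ?thesis .
  qed
qed

lemma Theta_bound: "x \<in> Theta M \<Longrightarrow> \<bar>x j\<bar> \<le> 1"
proof (induction x rule: Theta.induct)
  case (unit i) then show ?case by simp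
next
  case (absconv x y a b)
  have "\<bar>a * x j + b * y j\<bar> \<le> \<bar>a\<bar> * \<bar>x j\<bar> + \<bar>b\<bar> * \<bar>y j\<bar>"
    by (simp add: abs_mult[symmetric] abs_triangle_ineq)
  also have "\<dots> \<le> \<bar>a\<bar> * 1 + \<bar>b\<bar> * 1"
    using absconv by (intro add_mono mult_left_mono) auto
  finally show ?case using absconv by simp
next
  case (comb ps F ms)
  define E where "E k = fst (ps ! k)" for k
  have fin: "\<forall>k<length ps. finite (E k) \<and> E k \<noteq> {}" using comb(2) nth_mem unfolding E_def by blast
  have dis: "Max (E k) < Min (E k')" if "k < k'" "k' < length ps" for k k'
    using succ_sets[of "length ps" ms E k k'] comb(6,7) fin that unfolding E_def by blast
  define K where "K = {k. k < length ps \<and> j \<in> E k}"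
  have finK: "finite K" unfolding K_def by simp
  have "\<forall>k\<in>K. \<forall>k'\<in>K. k = k'"
    proof (intro ballI, rule ccontr)
      fix k k' assume kk: "k \<in> K" "k' \<in> K" "k \<noteq> k'"
      have k1: "k < length ps" "j \<in> E k" "k' < length ps" "j \<in> E k'" using kk unfolding K_def by auto
      then have f1: "finite (E k)" "finite (E k')" using fin by auto
      have a1: "j \<le> Max (E k)" "Min (E k) \<le> j" "j \<le> Max (E k')" "Min (E k') \<le> j"
        using Max_ge[OF f1(1) k1(2)] Min_le[OF f1(1) k1(2)] Max_ge[OF f1(2) k1(4)] Min_le[OF f1(2) k1(4)] by auto
      show False
      proof (cases "k < k'")
        case True then show ?thesis using dis[of k k'] k1 a1 by linarith
      next
        case False then have "k' < k" using kk by simp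
        then show ?thesis using dis[of k' k] k1 a1 by linarith
      qed
    qed
  then have "card K \<le> Suc 0" using card_le_Suc0_iff_eq[OF finK] by blast
  have "\<bar>\<Sum>k<length ps. if j \<in> fst (ps ! k) then snd (ps ! k) j else 0\<bar>
      \<le> (\<Sum>k<length ps. \<bar>if j \<in> fst (ps ! k) then snd (ps ! k) j else 0\<bar>)"
    by (rule sum_abs)
  also have "\<dots> \<le> (\<Sum>k<length ps. if j \<in> E k then 1 else 0)"
  proof (rule sum_mono)
    fix k assume "k \<in> {..<length ps}"
    then have "ps ! k \<in> set ps" by simp
    then show "\<bar>if j \<in> fst (ps ! k) then snd (ps ! k) j else 0\<bar> \<le> (if j \<in> E k then 1 else 0)"
      using comb(1) E_def by auto
  qed
  also have "\<dots> = real (card K)"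
    unfolding K_def by (rule count_if)
  also have "\<dots> \<le> 1" using \<open>card K \<le> Suc 0\<close> by simp
  finally show ?case by simp
qed


lemma Theta_restrict: "x \<in> Theta M \<Longrightarrow> (\<lambda>j. if j \<in> G then x j else 0) \<in> Theta M"
proof (induction x rule: Theta.induct)
  case (unit i)
  show ?case
  proof (cases "i \<in> G")
    case True
    have "(\<lambda>j. if j \<in> G then (if j = i then 1 else 0) else 0) = (\<lambda>j. if j = i then 1 else 0)"
      using True by auto
    show ?thesis unfolding \<open>_ = _\<close> using Theta.unit[of i M] unit by simp
  next
    case False
    then have "(\<lambda>j. if j \<in> G then (if j = i then 1 else 0::real) else 0) = (\<lambda>j. 0)"
      by auto
    then show ?thesis using Theta_zero by simp
  qed
next
  case (absconv x y a b)
  have "(\<lambda>j. if j \<in> G then a * x j + b * y j else 0)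
     = (\<lambda>j. a * (if j \<in> G then x j else 0) + b * (if j \<in> G then y j else 0))" by auto
  then show ?case using Theta.absconv[OF absconv(4,5,3)] by simp
next
  case (comb ps F ms)
  define ps' where "ps' = map (\<lambda>p. (fst p, \<lambda>j. if j \<in> G then snd p j else 0)) ps"
  have "(\<lambda>j. (1/2) * (\<Sum>k<length ps'. if j \<in> fst (ps' ! k) then snd (ps' ! k) j else 0)) \<in> Theta M"
    apply (rule Theta.comb[of _ _ F ms])
    using comb unfolding ps'_def by (auto simp: in_set_conv_nth)
  moreover have "(\<lambda>j. (1/2) * (\<Sum>k<length ps'. if j \<in> fst (ps' ! k) then snd (ps' ! k) j else 0))
    = (\<lambda>j. if j \<in> G then (1/2) * (\<Sum>k<length ps. if j \<in> fst (ps ! k) then snd (ps ! k) j else 0) else 0)"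
  proof (rule ext)
    fix j
    have nth: "\<And>k. k < length ps \<Longrightarrow> ps' ! k = (fst (ps!k), \<lambda>j. if j \<in> G then snd (ps!k) j else 0)"
      unfolding ps'_def by simp
    have l: "length ps' = length ps" unfolding ps'_def by simp
    show "(1/2) * (\<Sum>k<length ps'. if j \<in> fst (ps' ! k) then snd (ps' ! k) j else 0)
      = (if j \<in> G then (1/2) * (\<Sum>k<length ps. if j \<in> fst (ps ! k) then snd (ps ! k) j else 0) else 0)"
    proof (cases "j \<in> G")
      case True
      then show ?thesis unfolding l by (auto simp: nth intro!: sum.cong)
    next
      case False
      then show ?thesis unfolding l by (auto simp: nth intro!: sum.neutral)
    qed
  qed
  ultimately show ?case by simp
qed


lemma Theta_l1:
  assumes "finite S" "S \<subseteq> {1..}" "\<forall>j. j \<notin> S \<longrightarrow> v j = 0" "(\<Sum>j\<in>S. \<bar>v j\<bar>) \<le> 1"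
  shows "v \<in> Theta M"
  using assms
proof (induction S arbitrary: v rule: finite_induct)
  case empty
  then have "v = (\<lambda>j. 0)" by auto
  then show ?case using Theta_zero by simp
next
  case (insert i S)
  define s where "s = (\<Sum>j\<in>S. \<bar>v j\<bar>)"
  have s0: "s \<ge> 0" unfolding s_def by (simp add: sum_nonneg)
  have tot: "\<bar>v i\<bar> + s \<le> 1" using insert unfolding s_def by simp
  have ei: "(\<lambda>j. if j = i then 1 else 0) \<in> Theta M" using insert(4) by (intro Theta.unit) auto
  show ?case
  proof (cases "s = 0")
    case True
    then have "\<forall>j\<in>S. v j = 0" unfolding s_def using insert(1)
      by (simp add: sum_nonneg_eq_0_iff)
    then have "v = (\<lambda>j. v i * (if j = i then 1 else 0) + 0 * (if j = i then 1 else 0))"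
      using insert(5) by (auto simp: fun_eq_iff)
    then show ?thesis using Theta.absconv[OF ei ei, of "v i" 0] tot True by simp
  next
    case False
    then have sp: "s > 0" using s0 by simp
    define w where "w j = (if j \<in> S then v j / s else 0)" for j
    have "w \<in> Theta M"
    proof (rule insert.IH)
      show "S \<subseteq> {1..}" using insert by simp
      show "\<forall>j. j \<notin> S \<longrightarrow> w j = 0" unfolding w_def by simp
      have "(\<Sum>j\<in>S. \<bar>w j\<bar>) = (\<Sum>j\<in>S. \<bar>v j\<bar> / s)"
        unfolding w_def using sp by (intro sum.cong) auto
      also have "\<dots> = 1" using sp unfolding s_def by (simp add: sum_divide_distrib[symmetric])
      finally show "(\<Sum>j\<in>S. \<bar>w j\<bar>) \<le> 1" by simp
    qed
    moreover have "v = (\<lambda>j. v i * (if j = i then 1 else 0) + s * w j)"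
      using insert(2,5) sp unfolding w_def by (auto simp: fun_eq_iff)
    ultimately show ?thesis using Theta.absconv[OF ei, of w "v i" s] tot s0 by simp
  qed
qed



definition fs :: "(nat \<Rightarrow> real) \<Rightarrow> bool" where "fs v \<longleftrightarrow> finite (supp v) \<and> v 0 = 0"

definition Sset :: "nat set set \<Rightarrow> (nat \<Rightarrow> real) \<Rightarrow> real set" where
  "Sset M v = {t. 0 < t \<and> (\<lambda>j. v j / t) \<in> Theta M}"

lemma normM_Sset: "normM M v = Inf (Sset M v)" unfolding normM_def Sset_def by simp

lemma bdd_Sset: "bdd_below (Sset M v)" unfolding Sset_def by (rule bdd_belowI[of _ 0]) auto

lemma normM_l1:
  assumes "fs v" "t > 0" "(\<Sum>j\<in>supp v. \<bar>v j\<bar>) \<le> t"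
  shows "t \<in> Sset M v"
proof -
  have "(\<lambda>j. v j / t) \<in> Theta M"
  proof (rule Theta_l1[of "supp v"])
    show "finite (supp v)" using assms(1) fs_def by auto
    show "supp v \<subseteq> {1..}" using assms(1) unfolding fs_def supp_def
      by (auto simp: Suc_le_eq) (metis gr0I)
    show "\<forall>j. j \<notin> supp v \<longrightarrow> v j / t = 0" unfolding supp_def by simp
    have "(\<Sum>j\<in>supp v. \<bar>v j / t\<bar>) = (\<Sum>j\<in>supp v. \<bar>v j\<bar>) / t"
      using assms(2) by (simp add: sum_divide_distrib)
    also have "\<dots> \<le> 1" using assms(2,3) by simp
    finally show "(\<Sum>j\<in>supp v. \<bar>v j / t\<bar>) \<le> 1" .
  qed
  then show ?thesis using assms(2) unfolding Sset_def by simp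
qed

lemma Sset_ne: "fs v \<Longrightarrow> Sset M v \<noteq> {}"
proof -
  assume fv: "fs v"
  have "0 \<le> (\<Sum>j\<in>supp v. \<bar>v j\<bar>)" by (simp add: sum_nonneg)
  then have "(\<Sum>j\<in>supp v. \<bar>v j\<bar>) + 1 \<in> Sset M v" by (intro normM_l1[OF fv]) linarith+
  then show ?thesis by blast
qed

lemma normM_ge: "fs v \<Longrightarrow> \<bar>v j\<bar> \<le> normM M v"
  unfolding normM_Sset
proof (rule cInf_greatest)
  assume "fs v" then show "Sset M v \<noteq> {}" by (rule Sset_ne)
  fix t assume "t \<in> Sset M v"
  then have tp: "t > 0" and th: "(\<lambda>j. v j / t) \<in> Theta M" unfolding Sset_def by auto
  have "\<bar>v j / t\<bar> \<le> 1" using Theta_bound[OF th] .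
  then have "\<bar>v j\<bar> / t \<le> 1" using tp by (simp add: abs_divide)
  then show "\<bar>v j\<bar> \<le> t" using tp by (simp add: divide_le_eq)
qed

lemma normM_nonneg: "fs v \<Longrightarrow> 0 \<le> normM M v"
  using normM_ge[of v 0 M] by simp

lemma normM_le_l1: "fs v \<Longrightarrow> normM M v \<le> (\<Sum>j\<in>supp v. \<bar>v j\<bar>)"
proof (rule dense_ge)
  fix t assume fv: "fs v" and t: "(\<Sum>j\<in>supp v. \<bar>v j\<bar>) < t"
  have "0 \<le> (\<Sum>j\<in>supp v. \<bar>v j\<bar>)" by (simp add: sum_nonneg)
  then have "t > 0" using t by linarith
  then have "t \<in> Sset M v" using normM_l1[OF fv, of t] t by simp
  then show "normM M v \<le> t" unfolding normM_Sset by (rule cInf_lower[OF _ bdd_Sset])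
qed

lemma Sset_up: "s \<in> Sset M v \<Longrightarrow> s \<le> t \<Longrightarrow> t \<in> Sset M v"
proof -
  assume s: "s \<in> Sset M v" and st: "s \<le> t"
  then have sp: "s > 0" and th: "(\<lambda>j. v j / s) \<in> Theta M" unfolding Sset_def by auto
  have "(\<lambda>j. (s/t) * (v j / s)) \<in> Theta M" using Theta_scale[OF th, of "s/t"] sp st by simp
  moreover have "(\<lambda>j. (s/t) * (v j / s)) = (\<lambda>j. v j / t)" using sp by auto
  ultimately show ?thesis using sp st unfolding Sset_def by auto
qed

lemma normM_lt: "fs v \<Longrightarrow> normM M v < t \<Longrightarrow> (\<lambda>j. v j / t) \<in> Theta M"
proof -
  assume fv: "fs v" and lt: "normM M v < t"
  obtain s where "s \<in> Sset M v" "s < t" using cInf_lessD[OF Sset_ne[OF fv] lt[unfolded normM_Sset]] by auto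
  then have "t \<in> Sset M v" using Sset_up by auto
  then show ?thesis unfolding Sset_def by simp
qed

lemma fs_restrict: "fs v \<Longrightarrow> fs (\<lambda>j. if j \<in> G then v j else 0)"
  unfolding fs_def supp_def by (auto elim: finite_subset[rotated])

lemma normM_restrict: "fs v \<Longrightarrow> normM M (\<lambda>j. if j \<in> G then v j else 0) \<le> normM M v"
  unfolding normM_Sset[of M v]
proof (rule cInf_greatest)
  assume fv: "fs v" then show "Sset M v \<noteq> {}" by (rule Sset_ne)
  fix t assume "t \<in> Sset M v"
  then have tp: "t > 0" and th: "(\<lambda>j. v j / t) \<in> Theta M" unfolding Sset_def by auto
  have "(\<lambda>j. if j \<in> G then v j / t else 0) \<in> Theta M" using Theta_restrict[OF th] .
  moreover have "(\<lambda>j. if j \<in> G then v j / t else 0) = (\<lambda>j. (if j \<in> G then v j else 0) / t)" by auto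
  ultimately have "t \<in> Sset M (\<lambda>j. if j \<in> G then v j else 0)" using tp unfolding Sset_def by simp
  then show "normM M (\<lambda>j. if j \<in> G then v j else 0) \<le> t"
    unfolding normM_Sset by (rule cInf_lower[OF _ bdd_Sset])
qed



definition Rsucc :: "('b::linorder \<Rightarrow> real) \<Rightarrow> ('b \<Rightarrow> real) \<Rightarrow> bool" where
  "Rsucc v w \<longleftrightarrow> (\<forall>a\<in>supp v. \<forall>b\<in>supp w. a < b)"

lemma tilde3:
  assumes "sorted_wrt (<) ms" "0 \<notin> set ms" "length ms \<le> 3"
  shows "\<exists>\<nu>. length \<nu> \<le> 3 \<and> (\<forall>n\<in>set \<nu>. 1 \<le> n) \<and> set ms \<subseteq> tilde_fin \<nu>"
proof -
  consider "ms = []" | a where "ms = [a]" | a b where "ms = [a,b]" | a b c where "ms = [a,b,c]"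
    using assms(3) by (cases ms; cases "tl ms"; cases "tl (tl ms)"; auto)
  then show ?thesis
  proof cases
    case 1 then show ?thesis by (intro exI[of _ "[]"]) auto
  next
    case (2 a)
    have "a \<in> tilde_fin [a]" unfolding tilde_fin_def by (rule CollectI, rule exI[of _ 1]) simp
    then show ?thesis using 2 assms by (intro exI[of _ "[a]"]) auto
  next
    case (3 a b)
    have "a \<in> tilde_fin [a, b-a]" unfolding tilde_fin_def by (rule CollectI, rule exI[of _ 1]) simp
    moreover have "b \<in> tilde_fin [a, b-a]" unfolding tilde_fin_def
      using 3 assms by (intro CollectI exI[of _ 2]) simp
    ultimately show ?thesis using 3 assms by (intro exI[of _ "[a, b-a]"]) auto
  next
    case (4 a b c)
    have "a \<in> tilde_fin [a, b-a, c-b]" unfolding tilde_fin_def by (rule CollectI, rule exI[of _ 1]) simp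
    moreover have "b \<in> tilde_fin [a, b-a, c-b]" unfolding tilde_fin_def
      using 4 assms by (intro CollectI exI[of _ 2]) simp
    moreover have "c \<in> tilde_fin [a, b-a, c-b]" unfolding tilde_fin_def
      using 4 assms by (intro CollectI exI[of _ 3]) simp
    ultimately show ?thesis using 4 assms by (intro exI[of _ "[a, b-a, c-b]"]) auto
  qed
qed

lemma Theta_comb_list:
  assumes vs: "\<forall>v\<in>set vs. v \<in> Theta (MT S) \<and> finite (supp v) \<and> supp v \<noteq> {} \<and> 0 \<notin> supp v"
    and srt: "sorted_wrt Rsucc vs" and len: "length vs \<le> 3"
  shows "(\<lambda>j. (1/2) * sum_list (map (\<lambda>v. v j) vs)) \<in> Theta (MT S)"
proof -
  define ps where "ps = map (\<lambda>v. (supp v, v)) vs"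
  define ms where "ms = map (\<lambda>v. Min (supp v)) vs"
  have mslt: "Min (supp v) < Min (supp w)" if "v \<in> set vs" "w \<in> set vs" "Rsucc v w" for v w
    using that vs Min_in unfolding Rsucc_def by blast
  have "sorted_wrt (<) ms" unfolding ms_def sorted_wrt_map
    using srt by (rule sorted_wrt_mono_rel[rotated]) (use mslt in auto)
  moreover have "0 \<notin> set ms" unfolding ms_def using vs Min_in by fastforce
  moreover have "length ms \<le> 3" using len unfolding ms_def by simp
  ultimately obtain \<nu> where nu: "length \<nu> \<le> 3" "\<forall>n\<in>set \<nu>. 1 \<le> n" "set ms \<subseteq> tilde_fin \<nu>"
    using tilde3 by blast
  have FM: "tilde_fin \<nu> \<in> MT S" unfolding MT_def using nu by blast
  have "(\<lambda>j. (1/2) * (\<Sum>k<length ps. if j \<in> fst (ps ! k) then snd (ps ! k) j else 0)) \<in> Theta (MT S)"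
  proof (rule Theta.comb[OF _ _ FM])
    show "\<forall>p\<in>set ps. snd p \<in> Theta (MT S)" using vs unfolding ps_def by auto
    show "\<forall>p\<in>set ps. finite (fst p) \<and> fst p \<noteq> {}" using vs unfolding ps_def by auto
    show "length ms = length ps" unfolding ms_def ps_def by simp
    show "set ms \<subseteq> tilde_fin \<nu>" by (rule nu(3))
    show "\<forall>k<length ps. ms ! k \<le> Min (fst (ps ! k))" unfolding ms_def ps_def by simp
    show "\<forall>k. Suc k < length ps \<longrightarrow> Max (fst (ps ! k)) < ms ! Suc k"
    proof (intro allI impI)
      fix k assume k: "Suc k < length ps"
      then have k': "Suc k < length vs" unfolding ps_def by simp
      have R: "Rsucc (vs ! k) (vs ! Suc k)" using sorted_wrt_nth_less[OF srt _ k'] by simp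
      have i1: "vs ! k \<in> set vs" "vs ! Suc k \<in> set vs" using k' by auto
      have "Max (supp (vs ! k)) \<in> supp (vs ! k)" using vs i1 by (intro Max_in) auto
      moreover have "Min (supp (vs ! Suc k)) \<in> supp (vs ! Suc k)" using vs i1 by (intro Min_in) auto
      ultimately have "Max (supp (vs ! k)) < Min (supp (vs ! Suc k))" using R unfolding Rsucc_def by blast
      then show "Max (fst (ps ! k)) < ms ! Suc k" using k' unfolding ps_def ms_def by simp
    qed
  qed
  moreover have "(\<lambda>j. (1/2) * (\<Sum>k<length ps. if j \<in> fst (ps ! k) then snd (ps ! k) j else 0))
     = (\<lambda>j. (1/2) * sum_list (map (\<lambda>v. v j) vs))"
  proof (rule ext)
    fix j
    have "(\<Sum>k<length ps. if j \<in> fst (ps ! k) then snd (ps ! k) j else 0) = (\<Sum>k<length vs. (vs ! k) j)"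
      unfolding ps_def by (intro sum.cong) (auto simp: supp_def)
    also have "\<dots> = sum_list (map (\<lambda>v. v j) vs)"
      by (simp add: sum_list_sum_nth atLeast0LessThan)
    finally show "(1/2) * (\<Sum>k<length ps. if j \<in> fst (ps ! k) then snd (ps ! k) j else 0)
      = (1/2) * sum_list (map (\<lambda>v. v j) vs)" by simp
  qed
  ultimately show ?thesis by simp
qed

lemma normM_three:
  assumes f: "fs v1" "fs v2" "fs v3"
    and R: "Rsucc v1 v2" "Rsucc v2 v3" "Rsucc v1 v3"
    and c: "normM (MT S) v1 \<le> c" "normM (MT S) v2 \<le> c" "normM (MT S) v3 \<le> c"
  shows "normM (MT S) (\<lambda>j. v1 j + v2 j + v3 j) \<le> 2 * c"
proof -
  have c0: "0 \<le> c" using normM_nonneg[OF f(1), of "MT S"] c(1) by linarith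
  have "normM (MT S) (\<lambda>j. v1 j + v2 j + v3 j) / 2 \<le> c"
  proof (rule dense_ge)
    fix t assume t: "c < t"
    then have tp: "t > 0" using c0 by linarith
    define w1 where "w1 j = v1 j / t" for j
    define w2 where "w2 j = v2 j / t" for j
    define w3 where "w3 j = v3 j / t" for j
    have th: "w1 \<in> Theta (MT S)" "w2 \<in> Theta (MT S)" "w3 \<in> Theta (MT S)"
      unfolding w1_def w2_def w3_def using normM_lt f c t by (metis le_less_trans)+
    have sw: "supp w1 = supp v1" "supp w2 = supp v2" "supp w3 = supp v3"
      unfolding w1_def w2_def w3_def supp_def using tp by auto
    define vs where "vs = filter (\<lambda>w. supp w \<noteq> {}) [w1, w2, w3]"
    have "(\<lambda>j. (1/2) * sum_list (map (\<lambda>v. v j) vs)) \<in> Theta (MT S)"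
    proof (rule Theta_comb_list)
      show "\<forall>v\<in>set vs. v \<in> Theta (MT S) \<and> finite (supp v) \<and> supp v \<noteq> {} \<and> 0 \<notin> supp v"
        using th sw f unfolding vs_def fs_def supp_def by auto
      show "sorted_wrt Rsucc vs" unfolding vs_def
        by (rule sorted_wrt_filter) (use R sw in \<open>simp add: Rsucc_def\<close>)
      show "length vs \<le> 3" unfolding vs_def by simp
    qed
    moreover have "(\<lambda>j. (1/2) * sum_list (map (\<lambda>v. v j) vs)) = (\<lambda>j. (v1 j + v2 j + v3 j) / (2 * t))"
    proof (rule ext)
      fix j
      have "sum_list (map (\<lambda>v. v j) vs) = sum_list (map (\<lambda>v. v j) [w1, w2, w3])"
        unfolding vs_def by (rule sum_list_map_filter) (auto simp: supp_def)
      then show "(1/2) * sum_list (map (\<lambda>v. v j) vs) = (v1 j + v2 j + v3 j) / (2 * t)"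
        unfolding w1_def w2_def w3_def using tp by (simp add: field_simps)
    qed
    ultimately have "2 * t \<in> Sset (MT S) (\<lambda>j. v1 j + v2 j + v3 j)" unfolding Sset_def using tp by simp
    then have "normM (MT S) (\<lambda>j. v1 j + v2 j + v3 j) \<le> 2 * t"
      unfolding normM_Sset by (rule cInf_lower[OF _ bdd_Sset])
    then show "normM (MT S) (\<lambda>j. v1 j + v2 j + v3 j) / 2 \<le> t" by simp
  qed
  then show ?thesis by simp
qed



definition br :: "(nat \<Rightarrow> bool) \<Rightarrow> (bool list \<Rightarrow> real) \<Rightarrow> nat \<Rightarrow> real" where
  "br \<sigma> x = (\<lambda>l. if 1 \<le> l then x (map \<sigma> [0..<l]) else 0)"

lemma normT_br: "normT T x = (SUP \<sigma>. normM (MT (Tsec T \<sigma>)) (br \<sigma> x))"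
  unfolding normT_def br_def by simp

lemma inj_pref: "inj (\<lambda>l. map \<sigma> [0..<l])"
  by (rule injI) (metis diff_zero length_map length_upt)

lemma c00T_supp: "x \<in> c00T \<Longrightarrow> finite (supp x)"
  unfolding c00T_def supp_def by simp

lemma supp_br: "supp (br \<sigma> x) \<subseteq> (\<lambda>l. map \<sigma> [0..<l]) -` supp x"
  unfolding supp_def br_def by auto

lemma fs_br: "x \<in> c00T \<Longrightarrow> fs (br \<sigma> x)"
  unfolding fs_def
proof
  assume x: "x \<in> c00T"
  have "finite ((\<lambda>l. map \<sigma> [0..<l]) -` supp x)"
    by (rule finite_vimageI[OF c00T_supp[OF x]]) (use inj_pref in auto)
  then show "finite (supp (br \<sigma> x))" using supp_br finite_subset by metis
  show "br \<sigma> x 0 = 0" unfolding br_def by simp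
qed

lemma l1_br: "x \<in> c00T \<Longrightarrow> (\<Sum>l\<in>supp (br \<sigma> x). \<bar>br \<sigma> x l\<bar>) \<le> (\<Sum>\<eta>\<in>supp x. \<bar>x \<eta>\<bar>)"
proof -
  assume x: "x \<in> c00T"
  let ?g = "\<lambda>l. map \<sigma> [0..<l]"
  have A: "supp (br \<sigma> x) \<subseteq> {l. 1 \<le> l}" unfolding supp_def br_def by auto
  have "(\<Sum>l\<in>supp (br \<sigma> x). \<bar>br \<sigma> x l\<bar>) = (\<Sum>l\<in>supp (br \<sigma> x). \<bar>x (?g l)\<bar>)"
    using A unfolding br_def by (intro sum.cong) auto
  also have "\<dots> = (\<Sum>\<eta>\<in>?g ` supp (br \<sigma> x). \<bar>x \<eta>\<bar>)"
    using sum.reindex[OF inj_on_subset[OF inj_pref subset_UNIV], of "\<lambda>\<eta>. \<bar>x \<eta>\<bar>"]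
    by (simp add: o_def)
  also have "\<dots> \<le> (\<Sum>\<eta>\<in>supp x. \<bar>x \<eta>\<bar>)"
    by (rule sum_mono2[OF c00T_supp[OF x]]) (use supp_br in auto)
  finally show ?thesis .
qed

lemma bddT: "x \<in> c00T \<Longrightarrow> bdd_above (range (\<lambda>\<sigma>. normM (MT (Tsec T \<sigma>)) (br \<sigma> x)))"
  by (rule bdd_aboveI[of _ "\<Sum>\<eta>\<in>supp x. \<bar>x \<eta>\<bar>"])
     (use normM_le_l1 fs_br l1_br order_trans in blast)

lemma normT_ge_br: "x \<in> c00T \<Longrightarrow> normM (MT (Tsec T \<sigma>)) (br \<sigma> x) \<le> normT T x"
  unfolding normT_br by (rule cSUP_upper[OF _ bddT]) auto

lemma normT_nonneg: "x \<in> c00T \<Longrightarrow> 0 \<le> normT T x"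
  using normT_ge_br[of x T "\<lambda>_. True"] normM_nonneg[OF fs_br] by (meson order_trans)

lemma normT_coord: "x \<in> c00T \<Longrightarrow> \<bar>x \<eta>\<bar> \<le> normT T x"
proof (cases "\<eta> = []")
  case True
  assume "x \<in> c00T"
  then show ?thesis using True normT_nonneg unfolding c00T_def by auto
next
  case False
  assume x: "x \<in> c00T"
  define \<sigma> where "\<sigma> i = (if i < length \<eta> then \<eta> ! i else False)" for i
  have "map \<sigma> [0..<length \<eta>] = \<eta>" by (rule nth_equalityI) (auto simp: \<sigma>_def)
  then have "br \<sigma> x (length \<eta>) = x \<eta>" unfolding br_def using False by (simp add: Suc_le_eq)
  then have "\<bar>x \<eta>\<bar> \<le> normM (MT (Tsec T \<sigma>)) (br \<sigma> x)" using normM_ge[OF fs_br[OF x]] by metis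
  also have "\<dots> \<le> normT T x" by (rule normT_ge_br[OF x])
  finally show ?thesis .
qed

lemma c00T_restrict: "x \<in> c00T \<Longrightarrow> (\<lambda>\<eta>. if \<eta> \<in> G then x \<eta> else 0) \<in> c00T"
  unfolding c00T_def by (auto elim: finite_subset[rotated])

lemma normT_restrict: "x \<in> c00T \<Longrightarrow> normT T (\<lambda>\<eta>. if \<eta> \<in> G then x \<eta> else 0) \<le> normT T x"
proof -
  assume x: "x \<in> c00T"
  show ?thesis unfolding normT_br[of T "(\<lambda>\<eta>. if \<eta> \<in> G then x \<eta> else 0)"]
  proof (rule cSUP_least)
    fix \<sigma>
    have "br \<sigma> (\<lambda>\<eta>. if \<eta> \<in> G then x \<eta> else 0)
      = (\<lambda>l. if l \<in> {l. map \<sigma> [0..<l] \<in> G} then br \<sigma> x l else 0)"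
      unfolding br_def by auto
    then have "normM (MT (Tsec T \<sigma>)) (br \<sigma> (\<lambda>\<eta>. if \<eta> \<in> G then x \<eta> else 0))
       \<le> normM (MT (Tsec T \<sigma>)) (br \<sigma> x)"
      using normM_restrict[OF fs_br[OF x], of "MT (Tsec T \<sigma>)" "{l. map \<sigma> [0..<l] \<in> G}"] by simp
    also have "\<dots> \<le> normT T x" by (rule normT_ge_br[OF x])
    finally show "normM (MT (Tsec T \<sigma>)) (br \<sigma> (\<lambda>\<eta>. if \<eta> \<in> G then x \<eta> else 0)) \<le> normT T x" .
  qed simp
qed

definition Lsucc :: "(bool list \<Rightarrow> real) \<Rightarrow> (bool list \<Rightarrow> real) \<Rightarrow> bool" where
  "Lsucc x y \<longleftrightarrow> (\<forall>\<eta>\<in>supp x. \<forall>\<xi>\<in>supp y. length \<eta> < length \<xi>)"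

lemma Rsucc_br: "Lsucc x y \<Longrightarrow> Rsucc (br \<sigma> x) (br \<sigma> y)"
  unfolding Lsucc_def Rsucc_def supp_def br_def
  by (auto split: if_splits) (metis diff_zero length_map length_upt)

lemma c00T_add: "x \<in> c00T \<Longrightarrow> y \<in> c00T \<Longrightarrow> (\<lambda>\<eta>. x \<eta> + y \<eta>) \<in> c00T"
proof -
  assume "x \<in> c00T" "y \<in> c00T"
  then have f: "finite ({\<eta>. x \<eta> \<noteq> 0} \<union> {\<eta>. y \<eta> \<noteq> 0})" unfolding c00T_def by auto
  have "{\<eta>. x \<eta> + y \<eta> \<noteq> 0} \<subseteq> {\<eta>. x \<eta> \<noteq> 0} \<union> {\<eta>. y \<eta> \<noteq> 0}" by auto
  then have "finite {\<eta>. x \<eta> + y \<eta> \<noteq> 0}" using finite_subset f by blast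
  then show ?thesis using \<open>x \<in> c00T\<close> \<open>y \<in> c00T\<close> unfolding c00T_def by auto
qed

lemma c00T_scale: "x \<in> c00T \<Longrightarrow> (\<lambda>\<eta>. c * x \<eta>) \<in> c00T"
  unfolding c00T_def by (auto elim: finite_subset[rotated])

lemma normT_three:
  assumes x: "x1 \<in> c00T" "x2 \<in> c00T" "x3 \<in> c00T"
    and L: "Lsucc x1 x2" "Lsucc x2 x3" "Lsucc x1 x3"
    and c: "normT T x1 \<le> c" "normT T x2 \<le> c" "normT T x3 \<le> c"
  shows "normT T (\<lambda>\<eta>. x1 \<eta> + x2 \<eta> + x3 \<eta>) \<le> 2 * c"
  unfolding normT_br
proof (rule cSUP_least)
  fix \<sigma>
  have e: "br \<sigma> (\<lambda>\<eta>. x1 \<eta> + x2 \<eta> + x3 \<eta>) = (\<lambda>l. br \<sigma> x1 l + br \<sigma> x2 l + br \<sigma> x3 l)"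
    unfolding br_def by auto
  show "normM (MT (Tsec T \<sigma>)) (br \<sigma> (\<lambda>\<eta>. x1 \<eta> + x2 \<eta> + x3 \<eta>)) \<le> 2 * c"
    unfolding e
    by (rule normM_three[OF fs_br[OF x(1)] fs_br[OF x(2)] fs_br[OF x(3)]
        Rsucc_br[OF L(1)] Rsucc_br[OF L(2)] Rsucc_br[OF L(3)]])
       (use normT_ge_br[OF x(1)] normT_ge_br[OF x(2)] normT_ge_br[OF x(3)] c in \<open>meson order_trans\<close>)+
qed simp



locale SP =
  fixes T :: "(bool list \<times> nat list) set" and J :: "(bool list \<Rightarrow> real) \<Rightarrow> 'a::banach"
  assumes Jadd: "\<forall>x\<in>c00T. \<forall>y\<in>c00T. J (\<lambda>\<eta>. x \<eta> + y \<eta>) = J x + J y"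
    and Jscal: "\<forall>x\<in>c00T. \<forall>c. J (\<lambda>\<eta>. c * x \<eta>) = c *\<^sub>R J x"
    and Jnorm: "\<forall>x\<in>c00T. norm (J x) = normT T x"
    and Jdense: "closure (J ` c00T) = UNIV"
begin

lemma zero_c00: "(\<lambda>_. 0) \<in> c00T" unfolding c00T_def by simp

lemma J_zero: "J (\<lambda>_. 0) = 0"
  using Jscal[rule_format, OF zero_c00, of 0] by simp

lemma J_diff: "x \<in> c00T \<Longrightarrow> y \<in> c00T \<Longrightarrow> J (\<lambda>\<eta>. x \<eta> - y \<eta>) = J x - J y"
proof -
  assume x: "x \<in> c00T" and y: "y \<in> c00T"
  have y': "(\<lambda>\<eta>. (-1) * y \<eta>) \<in> c00T" by (rule c00T_scale[OF y])
  have "J (\<lambda>\<eta>. x \<eta> - y \<eta>) = J (\<lambda>\<eta>. x \<eta> + (\<lambda>\<eta>. (-1) * y \<eta>) \<eta>)" by simp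
  also have "\<dots> = J x + J (\<lambda>\<eta>. (-1) * y \<eta>)" by (rule Jadd[rule_format, OF x y'])
  also have "\<dots> = J x - J y" using Jscal[rule_format, OF y, of "-1"] by simp
  finally show ?thesis .
qed

lemma c00T_diff: "x \<in> c00T \<Longrightarrow> y \<in> c00T \<Longrightarrow> (\<lambda>\<eta>. x \<eta> - y \<eta>) \<in> c00T"
  using c00T_add[OF _ c00T_scale, of x y "-1"] by simp

lemma sum_c00: "finite A \<Longrightarrow> (\<forall>i\<in>A. f i \<in> c00T) \<Longrightarrow>
   (\<lambda>\<eta>. \<Sum>i\<in>A. f i \<eta>) \<in> c00T \<and> J (\<lambda>\<eta>. \<Sum>i\<in>A. f i \<eta>) = (\<Sum>i\<in>A. J (f i))"
proof (induction A rule: finite_induct)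
  case empty then show ?case using zero_c00 J_zero by simp
next
  case (insert a A)
  then have fa: "f a \<in> c00T" and IH: "(\<lambda>\<eta>. \<Sum>i\<in>A. f i \<eta>) \<in> c00T \<and> J (\<lambda>\<eta>. \<Sum>i\<in>A. f i \<eta>) = (\<Sum>i\<in>A. J (f i))"
    by auto
  have e: "(\<lambda>\<eta>. \<Sum>i\<in>insert a A. f i \<eta>) = (\<lambda>\<eta>. f a \<eta> + (\<lambda>\<eta>. \<Sum>i\<in>A. f i \<eta>) \<eta>)"
    using insert(1,2) by simp
  have c: "(\<lambda>\<eta>. f a \<eta> + (\<lambda>\<eta>. \<Sum>i\<in>A. f i \<eta>) \<eta>) \<in> c00T"
    by (rule c00T_add[OF fa IH[THEN conjunct1]])
  have j: "J (\<lambda>\<eta>. f a \<eta> + (\<lambda>\<eta>. \<Sum>i\<in>A. f i \<eta>) \<eta>) = J (f a) + J (\<lambda>\<eta>. \<Sum>i\<in>A. f i \<eta>)"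
    by (rule Jadd[rule_format, OF fa IH[THEN conjunct1]])
  show ?case unfolding e using c j IH insert(1,2) by simp
qed

lemma J_inj: "x \<in> c00T \<Longrightarrow> y \<in> c00T \<Longrightarrow> J x = J y \<Longrightarrow> x = y"
proof
  fix \<eta>
  assume x: "x \<in> c00T" and y: "y \<in> c00T" and e: "J x = J y"
  have d: "(\<lambda>\<eta>. x \<eta> - y \<eta>) \<in> c00T" using c00T_diff[OF x y] .
  have "normT T (\<lambda>\<eta>. x \<eta> - y \<eta>) = 0" using Jnorm d J_diff[OF x y] e by force
  moreover have "\<bar>x \<eta> - y \<eta>\<bar> \<le> normT T (\<lambda>\<eta>. x \<eta> - y \<eta>)" by (rule normT_coord[OF d])
  ultimately have "\<bar>x \<eta> - y \<eta>\<bar> \<le> 0" by simp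
  then show "x \<eta> = y \<eta>" by simp
qed

lemma zvec_c00: "\<eta> \<noteq> [] \<Longrightarrow> zvec \<eta> \<in> c00T"
  unfolding c00T_def zvec_def by auto

lemma combo:
  assumes "finite A" "A \<subseteq> {\<eta>. \<eta> \<noteq> []}"
  shows "(\<Sum>i\<in>A. a i *\<^sub>R J (zvec i)) = J (\<lambda>\<xi>. if \<xi> \<in> A then a \<xi> else 0)"
    and "(\<lambda>\<xi>. if \<xi> \<in> A then a \<xi> else 0) \<in> c00T"
proof -
  have fc: "\<forall>i\<in>A. (\<lambda>\<xi>. a i * zvec i \<xi>) \<in> c00T" using assms(2) zvec_c00 c00T_scale by blast
  have e: "(\<lambda>\<xi>. \<Sum>i\<in>A. a i * zvec i \<xi>) = (\<lambda>\<xi>. if \<xi> \<in> A then a \<xi> else 0)"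
  proof (rule ext)
    fix \<xi>
    have "(\<Sum>i\<in>A. a i * zvec i \<xi>) = (\<Sum>i\<in>A. if \<xi> = i then a i else 0)"
      unfolding zvec_def by (intro sum.cong) auto
    also have "\<dots> = (if \<xi> \<in> A then a \<xi> else 0)" using assms(1) by (simp add: sum.delta)
    finally show "(\<Sum>i\<in>A. a i * zvec i \<xi>) = (if \<xi> \<in> A then a \<xi> else 0)" .
  qed
  show "(\<lambda>\<xi>. if \<xi> \<in> A then a \<xi> else 0) \<in> c00T" using sum_c00[OF assms(1) fc] e by simp
  have "J (\<lambda>\<xi>. \<Sum>i\<in>A. a i * zvec i \<xi>) = (\<Sum>i\<in>A. J (\<lambda>\<xi>. a i * zvec i \<xi>))"
    using sum_c00[OF assms(1) fc] by simp
  also have "\<dots> = (\<Sum>i\<in>A. a i *\<^sub>R J (zvec i))"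
    using Jscal zvec_c00 assms(2) by (intro sum.cong) auto
  finally show "(\<Sum>i\<in>A. a i *\<^sub>R J (zvec i)) = J (\<lambda>\<xi>. if \<xi> \<in> A then a \<xi> else 0)" using e by simp
qed

lemma uncond: "one_unconditional (\<lambda>\<eta>. J (zvec \<eta>)) {\<eta>. \<eta> \<noteq> []}"
  unfolding one_unconditional_def
proof (intro allI impI)
  fix A B :: "bool list set" and a :: "bool list \<Rightarrow> real"
  assume B: "finite B" and AB: "A \<subseteq> B" and BI: "B \<subseteq> {\<eta>. \<eta> \<noteq> []}"
  have A: "finite A" "A \<subseteq> {\<eta>. \<eta> \<noteq> []}" using B AB BI finite_subset by auto
  define x where "x = (\<lambda>\<xi>. if \<xi> \<in> B then a \<xi> else 0)"
  have x: "x \<in> c00T" unfolding x_def by (rule combo(2)[OF B BI])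
  have r: "(\<lambda>\<xi>. if \<xi> \<in> A then a \<xi> else 0) = (\<lambda>\<xi>. if \<xi> \<in> A then x \<xi> else 0)"
    unfolding x_def using AB by (auto simp: fun_eq_iff)
  have "norm (\<Sum>i\<in>A. a i *\<^sub>R J (zvec i)) = normT T (\<lambda>\<xi>. if \<xi> \<in> A then x \<xi> else 0)"
    unfolding combo(1)[OF A] r using Jnorm c00T_restrict[OF x] by simp
  also have "\<dots> \<le> normT T x" by (rule normT_restrict[OF x])
  also have "\<dots> = norm (\<Sum>i\<in>B. a i *\<^sub>R J (zvec i))"
    unfolding combo(1)[OF B BI] x_def[symmetric] using Jnorm x by simp
  finally show "norm (\<Sum>i\<in>A. a i *\<^sub>R J (zvec i)) \<le> norm (\<Sum>i\<in>B. a i *\<^sub>R J (zvec i))" .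
qed

end


context SP begin


lemma extend_functional:
  assumes "\<eta> \<noteq> []"
  shows "\<exists>g. bounded_linear g \<and> (\<forall>x\<in>c00T. g (J x) = x \<eta>) \<and> (\<forall>y. \<bar>g y\<bar> \<le> norm y)"
proof -
  define X where "X = J ` c00T"
  define f0 where "f0 y = (SOME x. x \<in> c00T \<and> J x = y) \<eta>" for y
  have f0J: "f0 (J x) = x \<eta>" if x: "x \<in> c00T" for x
  proof -
    have "(SOME x'. x' \<in> c00T \<and> J x' = J x) \<in> c00T \<and> J (SOME x'. x' \<in> c00T \<and> J x' = J x) = J x"
      by (rule someI[of _ x]) (use x in simp)
    then have "(SOME x'. x' \<in> c00T \<and> J x' = J x) = x" using J_inj x by blast
    then show ?thesis unfolding f0_def by simp
  qed
  have "1-lipschitz_on X f0"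
  proof (rule lipschitz_onI)
    fix y z assume "y \<in> X" "z \<in> X"
    then obtain x x' where x: "x \<in> c00T" "y = J x" and x': "x' \<in> c00T" "z = J x'"
      unfolding X_def by auto
    have d: "(\<lambda>\<eta>. x \<eta> - x' \<eta>) \<in> c00T" by (rule c00T_diff[OF x(1) x'(1)])
    have "dist (f0 y) (f0 z) = \<bar>x \<eta> - x' \<eta>\<bar>" unfolding x x' f0J[OF x(1)] f0J[OF x'(1)] dist_real_def ..
    also have "\<dots> \<le> normT T (\<lambda>\<eta>. x \<eta> - x' \<eta>)" by (rule normT_coord[OF d])
    also have "\<dots> = norm (J x - J x')" using Jnorm[rule_format, OF d] J_diff[OF x(1) x'(1)] by simp
    also have "\<dots> = 1 * dist y z" unfolding x x' dist_norm by simp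
    finally show "dist (f0 y) (f0 z) \<le> 1 * dist y z" .
  qed simp
  then obtain g where gl: "1-lipschitz_on (closure X) g" and gX: "\<forall>x\<in>X. g x = f0 x"
    using lipschitz_extend_closure by blast
  have cl: "closure X = UNIV" unfolding X_def by (rule Jdense)
  have gc: "continuous_on UNIV g" using lipschitz_on_continuous_on[OF gl] cl by simp
  have gJ: "g (J x) = x \<eta>" if "x \<in> c00T" for x
    using gX f0J that unfolding X_def by auto
  have add1: "g (y + z) = g y + g z" if yz: "y \<in> X" "z \<in> X" for y z
  proof -
    obtain x1 x2 where x: "x1 \<in> c00T" "y = J x1" "x2 \<in> c00T" "z = J x2"
      using yz unfolding X_def by blast
    have "y + z = J (\<lambda>\<eta>. x1 \<eta> + x2 \<eta>)" using Jadd[rule_format, OF x(1) x(3)] x by simp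
    then have "g (y + z) = x1 \<eta> + x2 \<eta>" using gJ c00T_add[OF x(1) x(3)] by simp
    then show ?thesis using gJ x by simp
  qed
  have add2: "g (y + z) = g y + g z" if "z \<in> X" for y z
  proof -
    have "(\<lambda>y. g (y + z) - g y - g z) y = 0"
    proof (rule continuous_constant_on_closure[where S=X and f="\<lambda>y. g (y + z) - g y - g z" and a=0])
      show "continuous_on (closure X) (\<lambda>y. g (y + z) - g y - g z)"
        by (simp only: cl, (intro continuous_intros continuous_on_compose2[OF gc])?, auto)
    next
      fix y assume "y \<in> X" then show "g (y + z) - g y - g z = 0" using add1[OF _ that] by simp
    next
      show "y \<in> closure X" unfolding cl by simp
    qed
    then show ?thesis by simp
  qed
  have add: "g (y + z) = g y + g z" for y z
  proof -
    have "(\<lambda>z. g (y + z) - g y - g z) z = 0"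
    proof (rule continuous_constant_on_closure[where S=X and f="\<lambda>z. g (y + z) - g y - g z" and a=0])
      show "continuous_on (closure X) (\<lambda>z. g (y + z) - g y - g z)"
        by (simp only: cl, (intro continuous_intros continuous_on_compose2[OF gc])?, auto)
    next
      fix z assume "z \<in> X" then show "g (y + z) - g y - g z = 0" using add2 by simp
    next
      show "z \<in> closure X" unfolding cl by simp
    qed
    then show ?thesis by simp
  qed
  have scal1: "g (c *\<^sub>R y) = c * g y" if yX: "y \<in> X" for c y
  proof -
    obtain x where x: "x \<in> c00T" "y = J x" using yX unfolding X_def by blast
    have "c *\<^sub>R y = J (\<lambda>\<eta>. c * x \<eta>)" using Jscal[rule_format, OF x(1)] x by simp
    then show ?thesis using gJ c00T_scale[OF x(1)] x by simp
  qed
  have scal: "g (c *\<^sub>R y) = c * g y" for c y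
  proof -
    have "(\<lambda>y. g (c *\<^sub>R y) - c * g y) y = 0"
    proof (rule continuous_constant_on_closure[where S=X and f="\<lambda>y. g (c *\<^sub>R y) - c * g y" and a=0])
      show "continuous_on (closure X) (\<lambda>y. g (c *\<^sub>R y) - c * g y)"
        by (simp only: cl, (intro continuous_intros continuous_on_compose2[OF gc])?, auto)
    next
      fix y assume "y \<in> X" then show "g (c *\<^sub>R y) - c * g y = 0" using scal1 by simp
    next
      show "y \<in> closure X" unfolding cl by simp
    qed
    then show ?thesis by simp
  qed
  have bnd1: "y \<in> {y. \<bar>g y\<bar> \<le> norm y}" if yX: "y \<in> X" for y
  proof -
    obtain x where x: "x \<in> c00T" "y = J x" using yX unfolding X_def by blast
    then show ?thesis using gJ[OF x(1)] normT_coord[OF x(1)] Jnorm[rule_format, OF x(1)] by simp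
  qed
  have "closed {y. \<bar>g y\<bar> \<le> norm y}"
    by (rule closed_Collect_le) (intro continuous_intros gc)+
  then have "closure X \<subseteq> {y. \<bar>g y\<bar> \<le> norm y}" using bnd1 by (intro closure_minimal) auto
  then have bnd: "\<bar>g y\<bar> \<le> norm y" for y using cl by auto
  have "bounded_linear g"
    by (rule bounded_linear_intro[of g 1]) (use add scal bnd in auto)
  then show ?thesis using gJ bnd by blast
qed

end


context SP begin

definition cf :: "bool list \<Rightarrow> 'a \<Rightarrow> real" where
  "cf \<eta> = (SOME g. bounded_linear g \<and> (\<forall>x\<in>c00T. g (J x) = x \<eta>) \<and> (\<forall>y. \<bar>g y\<bar> \<le> norm y))"

lemma cf: assumes "\<eta> \<noteq> []"
  shows "bounded_linear (cf \<eta>) \<and> (\<forall>x\<in>c00T. cf \<eta> (J x) = x \<eta>) \<and> (\<forall>y. \<bar>cf \<eta> y\<bar> \<le> norm y)"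
  unfolding cf_def by (rule someI_ex[OF extend_functional[OF assms]])

definition PP :: "(nat \<Rightarrow> bool list) \<Rightarrow> nat \<Rightarrow> 'a \<Rightarrow> 'a" where
  "PP e m y = (\<Sum>i<m. cf (e i) y *\<^sub>R J (zvec (e i)))"

context
  fixes e :: "nat \<Rightarrow> bool list"
  assumes be: "bij_betw e UNIV {\<eta>. \<eta> \<noteq> []}"
begin

lemma e_ne: "e n \<noteq> []" using be unfolding bij_betw_def by auto
lemma e_inj: "inj e" using be unfolding bij_betw_def by auto
lemma e_surj: "\<eta> \<noteq> [] \<Longrightarrow> \<exists>n. e n = \<eta>"
proof -
  assume "\<eta> \<noteq> []"
  then have "\<eta> \<in> range e" using be unfolding bij_betw_def by simp
  then show ?thesis by blast
qed

lemma cfe: "bounded_linear (cf (e n))" "\<And>x. x \<in> c00T \<Longrightarrow> cf (e n) (J x) = x (e n)" "\<bar>cf (e n) y\<bar> \<le> norm y"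
  using cf[OF e_ne] by auto

lemma P_J: "x \<in> c00T \<Longrightarrow> PP e m (J x) = J (\<lambda>\<xi>. if \<xi> \<in> e ` {..<m} then x \<xi> else 0)"
proof -
  assume x: "x \<in> c00T"
  have "PP e m (J x) = (\<Sum>i<m. x (e i) *\<^sub>R J (zvec (e i)))"
    unfolding PP_def using cfe(2)[OF x] by simp
  also have "\<dots> = (\<Sum>\<eta>\<in>e ` {..<m}. x \<eta> *\<^sub>R J (zvec \<eta>))"
    using sum.reindex[OF inj_on_subset[OF e_inj subset_UNIV], of "\<lambda>\<eta>. x \<eta> *\<^sub>R J (zvec \<eta>)" "{..<m}"]
    by (simp add: o_def)
  also have "\<dots> = J (\<lambda>\<xi>. if \<xi> \<in> e ` {..<m} then x \<xi> else 0)"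
    by (rule combo(1)) (use e_ne in auto)
  finally show ?thesis .
qed

lemma P_bl: "bounded_linear (PP e m)"
  unfolding PP_def
  by (intro bounded_linear_sum bounded_linear_compose[OF bounded_linear_scaleR_left] cfe(1))

lemma P_cont: "continuous_on UNIV (PP e m)"
  using P_bl linear_continuous_on by blast

lemma P_norm: "norm (PP e m y) \<le> norm y"
proof -
  have "closed {y. norm (PP e m y) \<le> norm y}"
    using closed_Collect_le[OF continuous_on_norm[OF P_cont] continuous_on_norm[OF continuous_on_id]] by simp
  moreover have "J ` c00T \<subseteq> {y. norm (PP e m y) \<le> norm y}"
  proof
    fix y assume "y \<in> J ` c00T"
    then obtain x where x: "x \<in> c00T" "y = J x" by blast
    have r: "(\<lambda>\<xi>. if \<xi> \<in> e ` {..<m} then x \<xi> else 0) \<in> c00T" by (rule c00T_restrict[OF x(1)])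
    have "norm (PP e m y) = normT T (\<lambda>\<xi>. if \<xi> \<in> e ` {..<m} then x \<xi> else 0)"
      unfolding x(2) P_J[OF x(1)] using Jnorm r by simp
    also have "\<dots> \<le> normT T x" by (rule normT_restrict[OF x(1)])
    also have "\<dots> = norm y" using Jnorm x by simp
    finally show "y \<in> {y. norm (PP e m y) \<le> norm y}" by simp
  qed
  ultimately have "closure (J ` c00T) \<subseteq> {y. norm (PP e m y) \<le> norm y}" by (rule closure_minimal[rotated])
  then show ?thesis using Jdense by auto
qed

lemma P_ev: "x \<in> c00T \<Longrightarrow> \<exists>M. \<forall>m\<ge>M. PP e m (J x) = J x"
proof -
  assume x: "x \<in> c00T"
  have "finite (e -` supp x)"
    by (rule finite_vimageI[OF c00T_supp[OF x]]) (use e_inj in auto)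
  then obtain M where M: "e -` supp x \<subseteq> {..<M}" using finite_nat_bounded by blast
  have "PP e m (J x) = J x" if "m \<ge> M" for m
  proof -
    have "(\<lambda>\<xi>. if \<xi> \<in> e ` {..<m} then x \<xi> else 0) = x"
    proof
      fix \<xi> show "(if \<xi> \<in> e ` {..<m} then x \<xi> else 0) = x \<xi>"
      proof (cases "x \<xi> = 0")
        case False
        then have "\<xi> \<noteq> []" using x unfolding c00T_def by auto
        then obtain n where n: "e n = \<xi>" using e_surj by blast
        then have "n \<in> e -` supp x" using False unfolding supp_def by simp
        then have "n < m" using M that by auto
        then show ?thesis using n by auto
      qed simp
    qed
    then show ?thesis using P_J[OF x] by simp
  qed
  then show ?thesis by blast
qed

lemma P_lim: "(\<lambda>m. PP e m y) \<longlonglongrightarrow> y"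
proof (rule LIMSEQ_I)
  fix r :: real assume r: "r > 0"
  have "y \<in> closure (J ` c00T)" using Jdense by simp
  then obtain y' where y': "y' \<in> J ` c00T" "dist y' y < r/2"
    using closure_approachable r by (metis half_gt_zero)
  then obtain x where x: "x \<in> c00T" "y' = J x" by blast
  obtain M where M: "\<forall>m\<ge>M. PP e m (J x) = J x" using P_ev[OF x(1)] by blast
  have "norm (PP e m y - y) < r" if "m \<ge> M" for m
  proof -
    have "PP e m y - y = PP e m (y - J x) + (J x - y)"
      using linear_diff[OF bounded_linear.linear[OF P_bl], of m y "J x"] M that by (simp add: algebra_simps)
    then have "norm (PP e m y - y) = norm (PP e m (y - J x) + (J x - y))" by (simp add: algebra_simps)
    also have "\<dots> \<le> norm (PP e m (y - J x)) + norm (J x - y)" by (rule norm_triangle_ineq)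
    also have "\<dots> \<le> norm (y - J x) + norm (J x - y)" using P_norm by simp
    also have "\<dots> < r" using y' x by (simp add: dist_norm norm_minus_commute)
    finally show ?thesis .
  qed
  then show "\<exists>no. \<forall>m\<ge>no. norm (PP e m y - y) < r" by blast
qed

lemma c_b: "cf (e n) (J (zvec (e i))) = (if i = n then 1 else 0)"
  using cfe(2)[OF zvec_c00[OF e_ne]] e_inj unfolding zvec_def by (auto dest: injD)

lemma coef_unique:
  assumes "(\<lambda>m. \<Sum>i<m. a i *\<^sub>R J (zvec (e i))) \<longlonglongrightarrow> y"
  shows "a = (\<lambda>n. cf (e n) y)"
proof
  fix k
  have "(\<lambda>m. cf (e k) (\<Sum>i<m. a i *\<^sub>R J (zvec (e i)))) \<longlonglongrightarrow> cf (e k) y"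
    by (rule bounded_linear.tendsto[OF cfe(1) assms])
  moreover have "cf (e k) (\<Sum>i<m. a i *\<^sub>R J (zvec (e i))) = (if k < m then a k else 0)" for m
  proof -
    have "cf (e k) (\<Sum>i<m. a i *\<^sub>R J (zvec (e i))) = (\<Sum>i<m. cf (e k) (a i *\<^sub>R J (zvec (e i))))"
      by (rule linear_sum[OF bounded_linear.linear[OF cfe(1)]])
    also have "\<dots> = (\<Sum>i<m. a i * cf (e k) (J (zvec (e i))))"
      using linear_scale[OF bounded_linear.linear[OF cfe(1)]] by simp
    also have "\<dots> = (\<Sum>i<m. if i = k then a i else 0)" unfolding c_b by (intro sum.cong) auto
    also have "\<dots> = (if k < m then a k else 0)" by (simp add: sum.delta')
    finally show ?thesis .
  qed
  ultimately have "(\<lambda>m. if k < m then a k else 0) \<longlonglongrightarrow> cf (e k) y" by simp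
  moreover have "(\<lambda>m. if k < m then a k else 0) \<longlonglongrightarrow> a k"
    by (rule tendsto_eventually, rule eventually_sequentiallyI[of "Suc k"]) auto
  ultimately show "a k = cf (e k) y" using LIMSEQ_unique by blast
qed

lemma schauder: "schauder_basis (\<lambda>n. J (zvec (e n)))"
  unfolding schauder_basis_def
proof
  fix y
  show "\<exists>!a. (\<lambda>n. \<Sum>i<n. a i *\<^sub>R J (zvec (e i))) \<longlonglongrightarrow> y"
  proof
    show "(\<lambda>n. \<Sum>i<n. cf (e i) y *\<^sub>R J (zvec (e i))) \<longlonglongrightarrow> y"
      using P_lim unfolding PP_def .
  qed (rule coef_unique)
qed

lemma basis_coef_eq: "basis_coef (\<lambda>n. J (zvec (e n))) n = cf (e n)"
proof
  fix y
  have "(THE a. (\<lambda>m. \<Sum>i<m. a i *\<^sub>R J (zvec (e i))) \<longlonglongrightarrow> y) = (\<lambda>n. cf (e n) y)"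
  proof (rule the_equality)
    show "(\<lambda>m. \<Sum>i<m. cf (e i) y *\<^sub>R J (zvec (e i))) \<longlonglongrightarrow> y" using P_lim unfolding PP_def .
  qed (rule coef_unique)
  then show "basis_coef (\<lambda>n. J (zvec (e n))) n y = cf (e n) y" unfolding basis_coef_def by simp
qed

end
end


lemma blinfun_apply_sum: "blinfun_apply (\<Sum>i\<in>A. g i) y = (\<Sum>i\<in>A. blinfun_apply (g i) y)"
  by (induction A rule: infinite_finite_induct) (auto simp: plus_blinfun.rep_eq)

lemma finite_short: "finite {\<eta>::bool list. length \<eta> < L}"
proof -
  have "finite {xs::bool list. set xs \<subseteq> UNIV \<and> length xs \<le> L}" by (rule finite_lists_length_le) simp
  then show ?thesis by (rule finite_subset[rotated]) auto
qed

context SP begin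
context
  fixes e :: "nat \<Rightarrow> bool list"
  assumes be: "bij_betw e UNIV {\<eta>. \<eta> \<noteq> []}"
begin

lemma long_tail: "\<exists>M. \<forall>i\<ge>M. L \<le> length (e i)"
proof -
  have "finite (e -` {\<eta>. length \<eta> < L})"
    by (rule finite_vimageI[OF finite_short]) (use e_inj[OF be] in auto)
  then obtain M where "e -` {\<eta>. length \<eta> < L} \<subseteq> {..<M}" using finite_nat_bounded by blast
  then show ?thesis by (metis (mono_tags) lessThan_iff linorder_not_le mem_Collect_eq subsetD vimageI)
qed

lemma normJ_scale: "x \<in> c00T \<Longrightarrow> norm (J (\<lambda>\<eta>. c * x \<eta>)) = \<bar>c\<bar> * norm (J x)"
  using Jscal by simp

lemma PP_lin: "linear (PP e m)" using bounded_linear.linear[OF P_bl[OF be]] .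

lemma tail_base:
  fixes F :: "'a \<Rightarrow> real"
  assumes Fb: "bounded_linear F" and nf: "\<And>y. \<bar>F y\<bar> \<le> nf * norm y" and nf0: "nf \<ge> 0"
    and \<epsilon>: "\<epsilon> > 0" and bad: "\<forall>M. \<exists>m\<ge>M. \<exists>y. \<bar>F (y - PP e m y)\<bar> > \<epsilon> * norm y"
  shows "\<exists>z\<in>c00T. (\<forall>\<eta>\<in>supp z. L \<le> length \<eta>) \<and> norm (J z) \<le> 1 \<and> \<epsilon>/4 \<le> F (J z)"
proof -
  have Fl: "linear F" using bounded_linear.linear[OF Fb] .
  obtain M0 where M0: "\<forall>i\<ge>M0. L \<le> length (e i)" using long_tail by blast
  obtain m y where m: "m \<ge> M0" and y: "\<bar>F (y - PP e m y)\<bar> > \<epsilon> * norm y" using bad by blast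
  have "y \<noteq> 0"
  proof
    assume "y = 0"
    then have "F (y - PP e m y) = 0" using linear_0[OF PP_lin] linear_0[OF Fl] by simp
    then show False using y \<open>y = 0\<close> by simp
  qed
  then have ny: "norm y > 0" by simp
  define y1 where "y1 = (1 / norm y) *\<^sub>R y"
  have ny1: "norm y1 = 1" unfolding y1_def using ny by simp
  have "F (y1 - PP e m y1) = (1 / norm y) * F (y - PP e m y)"
    unfolding y1_def using linear_scale[OF PP_lin] linear_scale[OF Fl] linear_diff[OF Fl]
    by (simp add: scaleR_diff_right[symmetric])
  then have Fy1: "\<bar>F (y1 - PP e m y1)\<bar> > \<epsilon>"
    using y ny by (simp add: abs_mult pos_less_divide_eq mult.commute)
  define \<eta>0 where "\<eta>0 = min (1/2) (\<epsilon> / (4 * (nf + 1)))"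
  have \<eta>0p: "\<eta>0 > 0" unfolding \<eta>0_def using \<epsilon> nf0 by simp
  have "y1 \<in> closure (J ` c00T)" using Jdense by simp
  then obtain y' where y': "y' \<in> J ` c00T" "dist y' y1 < \<eta>0" using closure_approachable \<eta>0p by blast
  then obtain x where x: "x \<in> c00T" "y' = J x" by blast
  define z0 where "z0 = (\<lambda>\<xi>. if \<xi> \<in> - (e ` {..<m}) then x \<xi> else 0)"
  have z0c: "z0 \<in> c00T" unfolding z0_def by (rule c00T_restrict[OF x(1)])
  have rc: "(\<lambda>\<xi>. if \<xi> \<in> e ` {..<m} then x \<xi> else 0) \<in> c00T" by (rule c00T_restrict[OF x(1)])
  have "z0 = (\<lambda>\<xi>. x \<xi> - (\<lambda>\<xi>. if \<xi> \<in> e ` {..<m} then x \<xi> else 0) \<xi>)" unfolding z0_def by auto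
  then have Jz0: "J z0 = J x - PP e m (J x)" using J_diff[OF x(1) rc] P_J[OF be x(1)] by simp
  define w where "w = y1 - PP e m y1"
  have "w - J z0 = (y1 - J x) - PP e m (y1 - J x)"
    unfolding w_def Jz0 using linear_diff[OF PP_lin] by (simp add: algebra_simps)
  then have "norm (w - J z0) \<le> norm (y1 - J x) + norm (PP e m (y1 - J x))"
    by (simp add: norm_triangle_ineq4)
  also have "\<dots> \<le> 2 * norm (y1 - J x)" using P_norm[OF be] by simp
  also have "\<dots> < 2 * \<eta>0" using y' x by (simp add: dist_norm norm_minus_commute)
  finally have wd: "norm (w - J z0) < 2 * \<eta>0" .
  have "\<bar>F w - F (J z0)\<bar> = \<bar>F (w - J z0)\<bar>" using linear_diff[OF Fl] by simp
  also have "\<dots> \<le> nf * norm (w - J z0)" by (rule nf)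
  also have "\<dots> \<le> nf * (2 * \<eta>0)" using wd nf0 by (intro mult_left_mono) auto
  also have "\<dots> \<le> \<epsilon> / 2"
  proof -
    have "\<eta>0 \<le> \<epsilon> / (4 * (nf + 1))" unfolding \<eta>0_def by simp
    then have "nf * (2 * \<eta>0) \<le> nf * (2 * (\<epsilon> / (4 * (nf + 1))))" using nf0 by (intro mult_left_mono) auto
    also have "\<dots> = \<epsilon> / 2 * (nf / (nf + 1))" using nf0 by (simp add: field_simps)
    also have "\<dots> \<le> \<epsilon> / 2" using nf0 \<epsilon> by (intro mult_left_le) auto
    finally show ?thesis .
  qed
  finally have "\<bar>F w - F (J z0)\<bar> \<le> \<epsilon> / 2" .
  then have Fz0: "\<bar>F (J z0)\<bar> > \<epsilon> / 2" using Fy1 unfolding w_def by linarith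
  have "norm (J z0) \<le> norm (J x)"
    using Jnorm z0c x(1) normT_restrict[OF x(1), of T "- (e ` {..<m})"] unfolding z0_def by simp
  also have "\<dots> \<le> norm y1 + norm (J x - y1)" by (metis add.commute diff_add_cancel norm_triangle_ineq)
  also have "\<dots> \<le> 2" using ny1 y' x \<eta>0p unfolding \<eta>0_def by (simp add: dist_norm)
  finally have nz0: "norm (J z0) \<le> 2" .
  define s where "s = (if F (J z0) \<ge> 0 then 1/2 else - 1/2 :: real)"
  define z where "z = (\<lambda>\<xi>. s * z0 \<xi>)"
  have zc: "z \<in> c00T" unfolding z_def by (rule c00T_scale[OF z0c])
  have Jz: "J z = s *\<^sub>R J z0" unfolding z_def using Jscal z0c by simp
  have "norm (J z) \<le> 1" unfolding Jz using nz0 by (simp add: s_def)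
  moreover have "\<epsilon>/4 \<le> F (J z)" unfolding Jz using linear_scale[OF Fl] Fz0 by (auto simp: s_def)
  moreover have "\<forall>\<eta>\<in>supp z. L \<le> length \<eta>"
  proof
    fix \<xi> assume "\<xi> \<in> supp z"
    then have xz: "x \<xi> \<noteq> 0" "\<xi> \<notin> e ` {..<m}" unfolding supp_def z_def z0_def by (auto split: if_splits)
    then have "\<xi> \<noteq> []" using x(1) unfolding c00T_def by auto
    then obtain n where n: "e n = \<xi>" using e_surj[OF be] by blast
    then have "n \<ge> m" using xz by force
    then show "L \<le> length \<xi>" using M0 m n by auto
  qed
  ultimately show ?thesis using zc by blast
qed

lemma supp_bound: "x \<in> c00T \<Longrightarrow> \<exists>L1. \<forall>\<eta>\<in>supp x. length \<eta> < L1"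
proof -
  assume "x \<in> c00T"
  then have "finite (length ` supp x)" using c00T_supp by blast
  then obtain L1 where "length ` supp x \<subseteq> {..<L1}" using finite_nat_bounded by blast
  then show ?thesis by auto
qed

lemma tail_pow:
  fixes F :: "'a \<Rightarrow> real"
  assumes Fl: "linear F"
    and base: "\<And>L. \<exists>z\<in>c00T. (\<forall>\<eta>\<in>supp z. L \<le> length \<eta>) \<and> norm (J z) \<le> 1 \<and> \<delta> \<le> F (J z)"
  shows "\<exists>z\<in>c00T. (\<forall>\<eta>\<in>supp z. L \<le> length \<eta>) \<and> norm (J z) \<le> 2^j \<and> 3^j * \<delta> \<le> F (J z)"
proof (induction j arbitrary: L)
  case 0 then show ?case using base by simp
next
  case (Suc j)
  obtain z1 where z1: "z1 \<in> c00T" "\<forall>\<eta>\<in>supp z1. L \<le> length \<eta>" "norm (J z1) \<le> 2^j" "3^j * \<delta> \<le> F (J z1)"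
    using Suc.IH by blast
  obtain L1 where L1: "\<forall>\<eta>\<in>supp z1. length \<eta> < L1" using supp_bound[OF z1(1)] by blast
  obtain z2 where z2: "z2 \<in> c00T" "\<forall>\<eta>\<in>supp z2. max L L1 \<le> length \<eta>" "norm (J z2) \<le> 2^j" "3^j * \<delta> \<le> F (J z2)"
    using Suc.IH by blast
  obtain L2 where L2: "\<forall>\<eta>\<in>supp z2. length \<eta> < L2" using supp_bound[OF z2(1)] by blast
  obtain z3 where z3: "z3 \<in> c00T" "\<forall>\<eta>\<in>supp z3. max L (max L1 L2) \<le> length \<eta>" "norm (J z3) \<le> 2^j" "3^j * \<delta> \<le> F (J z3)"
    using Suc.IH by blast
  define z where "z = (\<lambda>\<eta>. z1 \<eta> + z2 \<eta> + z3 \<eta>)"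
  have z12: "(\<lambda>\<eta>. z1 \<eta> + z2 \<eta>) \<in> c00T" by (rule c00T_add[OF z1(1) z2(1)])
  have zc: "z \<in> c00T" unfolding z_def using c00T_add[OF z12 z3(1)] by simp
  have "J z = J (\<lambda>\<eta>. (\<lambda>\<eta>. z1 \<eta> + z2 \<eta>) \<eta> + z3 \<eta>)" unfolding z_def by simp
  also have "\<dots> = J (\<lambda>\<eta>. z1 \<eta> + z2 \<eta>) + J z3" by (rule Jadd[rule_format, OF z12 z3(1)])
  also have "\<dots> = J z1 + J z2 + J z3" using Jadd[rule_format, OF z1(1) z2(1)] by simp
  finally have Jz: "J z = J z1 + J z2 + J z3" .
  have Ls: "Lsucc z1 z2" "Lsucc z2 z3" "Lsucc z1 z3" unfolding Lsucc_def
    using L1 L2 z2(2) z3(2) by (meson le_less_trans max.bounded_iff not_less)+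
  have "normT T z \<le> 2 * 2^j" unfolding z_def
    by (rule normT_three[OF z1(1) z2(1) z3(1) Ls]) (use Jnorm z1 z2 z3 in auto)
  then have nz: "norm (J z) \<le> 2^Suc j" using Jnorm zc by simp
  have "F (J z) = F (J z1) + F (J z2) + F (J z3)" unfolding Jz using linear_add[OF Fl] by simp
  then have Fz: "3^Suc j * \<delta> \<le> F (J z)" using z1(4) z2(4) z3(4) by simp
  have "\<forall>\<eta>\<in>supp z. L \<le> length \<eta>"
  proof
    fix \<eta> assume "\<eta> \<in> supp z"
    then have "\<eta> \<in> supp z1 \<or> \<eta> \<in> supp z2 \<or> \<eta> \<in> supp z3" unfolding z_def supp_def by auto
    then show "L \<le> length \<eta>" using z1(2) z2(2) z3(2) by auto
  qed
  then show ?case using zc nz Fz by blast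
qed

lemma tail:
  fixes F :: "'a \<Rightarrow> real"
  assumes Fb: "bounded_linear F" and nf: "\<And>y. \<bar>F y\<bar> \<le> nf * norm y" and nf0: "nf \<ge> 0"
    and \<epsilon>: "\<epsilon> > 0"
  shows "\<exists>M. \<forall>m\<ge>M. \<forall>y. \<bar>F (y - PP e m y)\<bar> \<le> \<epsilon> * norm y"
proof (rule ccontr)
  assume "\<not> ?thesis"
  then have bad: "\<forall>M. \<exists>m\<ge>M. \<exists>y. \<bar>F (y - PP e m y)\<bar> > \<epsilon> * norm y" by (auto simp: not_le)
  have Fl: "linear F" using bounded_linear.linear[OF Fb] .
  have "\<exists>z\<in>c00T. (\<forall>\<eta>\<in>supp z. 0 \<le> length \<eta>) \<and> norm (J z) \<le> 2^j \<and> 3^j * (\<epsilon>/4) \<le> F (J z)" for j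
    by (rule tail_pow[OF Fl tail_base[OF Fb nf nf0 \<epsilon> bad]])
  then have ineq: "3^j * (\<epsilon>/4) \<le> nf * 2^j" for j
    by (meson abs_ge_self mult_left_mono nf nf0 order_trans)
  obtain j where j: "nf / (\<epsilon>/4) < (3/2::real)^j" using real_arch_pow[of "3/2"] by auto
  have "(3/2::real)^j = 3^j / 2^j" by (simp add: power_divide)
  also have "\<dots> \<le> nf / (\<epsilon>/4)" using ineq[of j] \<epsilon> by (simp add: field_simps)
  finally show False using j by simp
qed

lemma shrink: "shrinking (\<lambda>n. J (zvec (e n)))"
  unfolding shrinking_def basis_coef_eq[OF be]
proof (intro conjI allI)
  fix n show "bounded_linear (cf (e n))" using cfe(1)[OF be] .
next
  let ?S = "span (range (\<lambda>n. Blinfun (cf (e n))))"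
  have "f \<in> closure ?S" for f :: "'a \<Rightarrow>\<^sub>L real"
  proof -
    define F where "F = blinfun_apply f"
    have Fb: "bounded_linear F" unfolding F_def by (rule blinfun.bounded_linear_right)
    have Fl: "linear F" using bounded_linear.linear[OF Fb] .
    define G where "G m = (\<Sum>i<m. F (J (zvec (e i))) *\<^sub>R Blinfun (cf (e i)))" for m
    have GS: "G m \<in> ?S" for m
      unfolding G_def by (intro span_sum span_scale span_base) auto
    have Gapp: "blinfun_apply (G m) y = F (PP e m y)" for m y
    proof -
      have "blinfun_apply (G m) y = (\<Sum>i<m. F (J (zvec (e i))) * cf (e i) y)"
        unfolding G_def blinfun_apply_sum using bounded_linear_Blinfun_apply[OF cfe(1)[OF be]]
        by (simp add: scaleR_blinfun.rep_eq)
      also have "\<dots> = (\<Sum>i<m. F (cf (e i) y *\<^sub>R J (zvec (e i))))"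
        using linear_scale[OF Fl] by (simp add: mult.commute)
      also have "\<dots> = F (PP e m y)"
        unfolding PP_def by (rule linear_sum[OF Fl, symmetric])
      finally show ?thesis .
    qed
    have "G \<longlonglongrightarrow> f"
    proof (rule LIMSEQ_I)
      fix r :: real assume r: "r > 0"
      obtain M where M: "\<forall>m\<ge>M. \<forall>y. \<bar>F (y - PP e m y)\<bar> \<le> (r/2) * norm y"
        using tail[OF Fb, of "norm f" "r/2"] norm_blinfun[of f] r unfolding F_def by auto
      have "norm (G m - f) < r" if "m \<ge> M" for m
      proof -
        have "norm (G m - f) \<le> r/2"
        proof (rule norm_blinfun_bound)
          show "0 \<le> r/2" using r by simp
          fix y
          have "blinfun_apply (G m - f) y = - F (y - PP e m y)"
            using Gapp linear_diff[OF Fl] unfolding F_def by (simp add: minus_blinfun.rep_eq)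
          then show "norm (blinfun_apply (G m - f) y) \<le> r/2 * norm y" using M that by simp
        qed
        then show ?thesis using r by simp
      qed
      then show "\<exists>no. \<forall>m\<ge>no. norm (G m - f) < r" by blast
    qed
    then show ?thesis unfolding closure_sequential using GS by blast
  qed
  then show "closure ?S = UNIV" by auto
qed

end
end

theorem lemma5p5:
  fixes T :: "(bool list \<times> nat list) set"
    and J :: "(bool list \<Rightarrow> real) \<Rightarrow> 'a::banach"
  assumes "tree2N T"
    and "\<forall>x\<in>c00T. \<forall>y\<in>c00T. J (\<lambda>\<eta>. x \<eta> + y \<eta>) = J x + J y"
    and "\<forall>x\<in>c00T. \<forall>c. J (\<lambda>\<eta>. c * x \<eta>) = c *\<^sub>R J x"
    and "\<forall>x\<in>c00T. norm (J x) = normT T x"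
    and "closure (J ` c00T) = UNIV"
  shows "one_unconditional (\<lambda>\<eta>. J (zvec \<eta>)) {\<eta>. \<eta> \<noteq> []}
    \<and> (\<forall>e. bij_betw e (UNIV :: nat set) {\<eta>. \<eta> \<noteq> []} \<longrightarrow>
          schauder_basis (\<lambda>n. J (zvec (e n))) \<and> shrinking (\<lambda>n. J (zvec (e n))))"
  proof -
  interpret SP T J using assms(2-5) by unfold_locales
  have "\<forall>e. bij_betw e (UNIV :: nat set) {\<eta>. \<eta> \<noteq> []} \<longrightarrow>
          schauder_basis (\<lambda>n. J (zvec (e n))) \<and> shrinking (\<lambda>n. J (zvec (e n)))"
    using schauder shrink by blast
  then show ?thesis using uncond by blast
qed

end
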